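(* Let $G$ be a real $n\times m$ matrix, $\mathbf v\in\mathbb R^n$ and $f\in\mathbb R^{1\times m}$. Consider the linear program of maximizing $fx$ subject to $Gx\le\mathbf v$. Let $\widehat G\in\mathbb R^{(n+1)\times m}$ be $G$ with the row $-f$ appended, and for $h\in\mathbb R$ let $\widehat{\mathbf v}(h)\in\mathbb R^{n+1}$ be $\mathbf v$ with the entry $-h$ appended. Let $P$ be the nonnegative orthant of $\mathbb R^{n+1}$, and let $e_{n+1}$ be the $(n+1)$-th standard basis vector. Assume $\mathcal R(\widehat G)\cap P=\{0\}$, and assume that the linear program is feasible and attains its maximum value $h_o$. For $h\le h_o$ let $P_c(h)=(\widehat{\mathbf v}(h)+\mathcal R(\widehat G))\cap P$, which is a nonempty polytope. Fix $h\le h_o$ and let $h_m$ be the largest $(n+1)$-th component among the extreme points of $P_c(h)$. (i) Let $g_c$ be an extreme point of $P_c(h)$ with $(g_c)_{n+1}=h_m$, and set $y_o=g_c-h_m e_{n+1}$. Then $y_o$ is an extreme point of $P_c(h_o)$, the equation $\widehat G x=\widehat{\mathbf v}(h_o)-y_o$ has at least one solution, and every solution $x$ of it is an optimal solution of the linear program, that is, $Gx\le\mathbf v$ and $fx=h_o$. (ii) Let $g_1,\dots,g_p$ be the extreme points of $P_c(h_o)$. Then the set of all optimal solutions of the linear program equals $$\{x\in\mathbb R^m:\widehat G x=\widehat{\mathbf v}(h_o)-y \text{ for some } y\in\mathrm{conv}\{g_1,\dots,g_p\}\}.$$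
   Context: $\mathrm{conv}$ denotes convex hull. The paper writes $G,\mathbf v$ for the augmented objects $\widehat G,\widehat{\mathbf v}(h_o)$ in this statement. *)

theory Defs
  imports "HOL-Analysis.Analysis"
begin

text \<open>Indices of R^(n+1) are \<open>'n option\<close>: \<open>Some i\<close> are the original n coordinates,
  \<open>None\<close> is the appended (n+1)-th coordinate.\<close>

definition Ghat :: "real^'m^'n \<Rightarrow> real^'m \<Rightarrow> real^'m^('n option)" where
  "Ghat G f = (\<chi> i. case i of None \<Rightarrow> - f | Some j \<Rightarrow> G $ j)"

definition vhat :: "real^'n \<Rightarrow> real \<Rightarrow> real^('n option)" where
  "vhat v h = (\<chi> i. case i of None \<Rightarrow> - h | Some j \<Rightarrow> v $ j)"

definition nonneg_orthant :: "(real^'k) set" where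
  "nonneg_orthant = {y. \<forall>i. 0 \<le> y $ i}"

definition Pc :: "real^'m^'n \<Rightarrow> real^'m \<Rightarrow> real^'n \<Rightarrow> real \<Rightarrow> (real^('n option)) set" where
  "Pc G f v h = (\<lambda>r. vhat v h + r) ` range (\<lambda>x. Ghat G f *v x) \<inter> nonneg_orthant"

definition lp_feasible :: "real^'m^'n \<Rightarrow> real^'n \<Rightarrow> real^'m \<Rightarrow> bool" where
  "lp_feasible G v x \<longleftrightarrow> (\<forall>i. (G *v x) $ i \<le> v $ i)"

end

theory Submission
  imports Defs
begin

lemma bounded_cone_slice:
  fixes V C :: "'a::euclidean_space set"
  assumes clV: "closed V" and sV: "subspace V" and clC: "closed C"
    and cone: "\<And>x t. x \<in> C \<Longrightarrow> t > 0 \<Longrightarrow> t *\<^sub>R x \<in> C"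
    and disj: "V \<inter> C \<subseteq> {0}"
  shows "bounded ((\<lambda>r. a + r) ` V \<inter> C)"
proof -
  define S where "S = sphere 0 1 \<inter> C"
  have V0: "0 \<in> V" using sV by (simp add: subspace_0)
  have cS: "compact S" unfolding S_def using clC by (simp add: compact_Int_closed)
  obtain \<delta> where dpos: "\<delta> > 0" and dle: "\<And>d. d \<in> S \<Longrightarrow> \<delta> \<le> infdist d V"
  proof (cases "S = {}")
    case True then show ?thesis using that[of 1] by auto
  next
    case False
    have "continuous_on S (\<lambda>d. infdist d V)"
      by (intro continuous_intros)
    then obtain d0 where d0: "d0 \<in> S" "\<And>d. d \<in> S \<Longrightarrow> infdist d0 V \<le> infdist d V"
      using continuous_attains_inf[OF cS False] by blast
    have "d0 \<notin> V" using d0(1) disj unfolding S_def by auto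
    then have "infdist d0 V \<noteq> 0" using in_closed_iff_infdist_zero[OF clV] V0 by blast
    then have "infdist d0 V > 0" using infdist_nonneg[of d0 V] by linarith
    then show ?thesis using that[of "infdist d0 V"] d0(2) by blast
  qed
  have "\<forall>y \<in> (\<lambda>r. a + r) ` V \<inter> C. norm y \<le> norm a / \<delta>"
  proof
    fix y assume y: "y \<in> (\<lambda>r. a + r) ` V \<inter> C"
    then obtain u where u: "u \<in> V" "y = a + u" "y \<in> C" by auto
    show "norm y \<le> norm a / \<delta>"
    proof (cases "y = 0")
      case True then show ?thesis using dpos by simp
    next
      case False
      then have ny: "norm y > 0" by simp
      define d where "d = (1 / norm y) *\<^sub>R y"
      have "d \<in> S" unfolding S_def d_def using cone[OF u(3), of "1 / norm y"] ny by simp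
      then have "\<delta> \<le> infdist d V" by (rule dle)
      also have "\<dots> \<le> dist d ((1 / norm y) *\<^sub>R u)"
        by (rule infdist_le) (simp add: u(1) sV subspace_scale)
      also have "dist d ((1 / norm y) *\<^sub>R u) = norm a / norm y"
      proof -
        have "d - (1 / norm y) *\<^sub>R u = (1 / norm y) *\<^sub>R a"
          unfolding d_def u(2) by (simp add: scaleR_right_distrib)
        then show ?thesis unfolding dist_norm using ny by simp
      qed
      finally have "\<delta> \<le> norm a / norm y" .
      then have "\<delta> * norm y \<le> norm a" using ny by (simp add: field_simps)
      then show ?thesis using dpos by (simp add: field_simps mult.commute)
    qed
  qed
  then show ?thesis unfolding bounded_iff by blast
qed

lemma Ghat_Some: "(Ghat G f *v x) $ Some j = (G *v x) $ j"
  by (simp add: Ghat_def matrix_vector_mult_def)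

lemma Ghat_None: "(Ghat G f *v x) $ None = - (f \<bullet> x)"
  by (simp add: Ghat_def matrix_vector_mult_def inner_vec_def sum_negf)

lemma vhat_Some: "vhat v h $ Some j = v $ j"
  by (simp add: vhat_def)

lemma vhat_None: "vhat v h $ None = - h"
  by (simp add: vhat_def)

lemma orthant_polyhedron: "polyhedron (nonneg_orthant :: (real^'k) set)"
proof -
  have e: "nonneg_orthant = \<Inter> ((\<lambda>i. {y::real^'k. axis i 1 \<bullet> y \<ge> 0}) ` UNIV)"
    unfolding nonneg_orthant_def by (auto simp: cart_eq_inner_axis inner_commute)
  have "polyhedron (\<Inter> ((\<lambda>i. {y::real^'k. axis i 1 \<bullet> y \<ge> 0}) ` UNIV))"
    by (rule polyhedron_Inter) (auto intro: polyhedron_halfspace_ge)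
  then show ?thesis using e by simp
qed


lemma Ghat_neg: "Ghat G f *v (- z) = - (Ghat G f *v z)"
  by (simp add: vec_eq_iff matrix_vector_mult_def sum_negf)

theorem mainTheorem5:
  fixes G :: "real^'m^'n" and v :: "real^'n" and f :: "real^'m" and h ho :: real
  assumes range_P: "range (\<lambda>x. Ghat G f *v x) \<inter> nonneg_orthant = {0}"
    and feasible: "\<exists>x. lp_feasible G v x"
    and attains: "\<exists>x. lp_feasible G v x \<and> f \<bullet> x = ho"
    and maximal: "\<forall>x. lp_feasible G v x \<longrightarrow> f \<bullet> x \<le> ho"
    and h_le: "h \<le> ho"
  defines "hm \<equiv> Max ((\<lambda>g. g $ None) ` {g. g extreme_point_of Pc G f v h})"
  shows "(\<forall>gc. gc extreme_point_of Pc G f v h \<and> gc $ None = hm \<longrightarrow>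
            (let yo = gc - hm *\<^sub>R axis None 1 in
               yo extreme_point_of Pc G f v ho
             \<and> (\<exists>x. Ghat G f *v x = vhat v ho - yo)
             \<and> (\<forall>x. Ghat G f *v x = vhat v ho - yo \<longrightarrow> lp_feasible G v x \<and> f \<bullet> x = ho)))
       \<and> {x. lp_feasible G v x \<and> f \<bullet> x = ho}
           = {x. \<exists>y \<in> convex hull {g. g extreme_point_of Pc G f v ho}.
                   Ghat G f *v x = vhat v ho - y}"
proof -
  define A where "A = Ghat G f"
  define V where "V = range (\<lambda>x. A *v x)"
  have sV: "subspace V" unfolding V_def
    by (rule linear_subspace_image) (auto simp: subspace_UNIV)
  have clV: "closed V" using sV by (rule closed_subspace)
  have Pc_eq: "\<And>k. Pc G f v k = (\<lambda>r. vhat v k + r) ` V \<inter> nonneg_orthant"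
    by (simp add: Pc_def V_def A_def)
  have memPc: "\<And>k y. y \<in> Pc G f v k \<longleftrightarrow> (\<exists>z. y = vhat v k + A *v z) \<and> (\<forall>i. 0 \<le> y $ i)"
    by (auto simp: Pc_def nonneg_orthant_def A_def)
  have polyPc: "polyhedron (Pc G f v k)" for k
  proof -
    have "affine ((\<lambda>r. vhat v k + r) ` V)"
      using subspace_imp_affine[OF sV] affine_translation by blast
    then show ?thesis unfolding Pc_eq
      by (intro polyhedron_Int affine_imp_polyhedron orthant_polyhedron)
  qed
  have cvx: "convex (Pc G f v k)" for k using polyPc by (rule polyhedron_imp_convex)
  have cpt: "compact (Pc G f v k)" for k
  proof -
    have "bounded (Pc G f v k)" unfolding Pc_eq
    proof (rule bounded_cone_slice[OF clV sV])
      show "closed (nonneg_orthant :: (real^'n option) set)"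
        using orthant_polyhedron by (rule polyhedron_imp_closed)
      show "\<And>x t. x \<in> nonneg_orthant \<Longrightarrow> t > 0 \<Longrightarrow> t *\<^sub>R x \<in> nonneg_orthant"
        by (simp add: nonneg_orthant_def)
      show "V \<inter> nonneg_orthant \<subseteq> {0}" using range_P by (simp add: V_def A_def)
    qed
    then show ?thesis using polyPc polyhedron_imp_closed compact_eq_bounded_closed by blast
  qed
  have Acomp: "(A *v x) $ Some j = (G *v x) $ j" "(A *v x) $ None = - (f \<bullet> x)" for x j
    by (simp_all add: A_def Ghat_Some Ghat_None)
  have L: "lp_feasible G v x \<and> f \<bullet> x = k + y $ None"
    if "A *v x = vhat v k - y" "\<forall>i. 0 \<le> y $ i" for x k y
  proof -
    have c: "(A *v x) $ i = (vhat v k - y) $ i" for i using that(1) by simp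
    have "(G *v x) $ j \<le> v $ j" for j
      using c[of "Some j"] that(2) by (simp add: Acomp vhat_Some)
    moreover have "f \<bullet> x = k + y $ None"
      using c[of None] by (simp add: Acomp vhat_None)
    ultimately show ?thesis by (simp add: lp_feasible_def)
  qed
  have up: "y $ None \<le> ho - k" if yin: "y \<in> Pc G f v k" for y k
  proof -
    obtain z where z: "y = vhat v k + A *v z" "\<forall>i. 0 \<le> y $ i" using yin memPc by blast
    have "A *v (- z) = vhat v k - y" using z(1) by (simp add: A_def Ghat_neg)
    from L[OF this z(2)] maximal show ?thesis by force
  qed
  obtain x0 where x0: "lp_feasible G v x0" "f \<bullet> x0 = ho" using attains by blast
  have opt_in: "vhat v k - A *v x \<in> Pc G f v k \<and> (vhat v k - A *v x) $ None = ho - k"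
    if "lp_feasible G v x" "f \<bullet> x = ho" "k \<le> ho" for x k
  proof -
    have "vhat v k - A *v x = vhat v k + A *v (- x)" by (simp add: A_def Ghat_neg)
    moreover have "0 \<le> (vhat v k - A *v x) $ i" for i
    proof (cases i)
      case None then show ?thesis using that by (simp add: Acomp vhat_None)
    next
      case (Some j) then show ?thesis using that(1)
        by (simp add: Acomp vhat_Some lp_feasible_def)
    qed
    ultimately show ?thesis using that memPc by (simp add: Acomp vhat_None) blast
  qed
  define E where "E = {g. g extreme_point_of Pc G f v h}"
  have finE: "finite E" unfolding E_def using polyPc by (rule finite_polyhedron_extreme_points)
  have KM: "Pc G f v k = convex hull {g. g extreme_point_of Pc G f v k}" for k
    using cpt cvx by (rule Krein_Milman_Minkowski)
  define p where "p = vhat v h - A *v x0"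
  have p: "p \<in> Pc G f v h" "p $ None = ho - h" using opt_in[OF x0 h_le] p_def by auto
  have Ene: "E \<noteq> {}"
  proof
    assume "E = {}"
    then have "Pc G f v h = {}" using KM[of h] unfolding E_def by simp
    then show False using p(1) by simp
  qed
  have EPc: "E \<subseteq> Pc G f v h" unfolding E_def by (auto simp: extreme_point_of_def)
  have hm_le: "hm \<le> ho - h" unfolding hm_def E_def[symmetric]
    using finE Ene EPc up by (auto simp: Max_le_iff)
  have hm_ge: "ho - h \<le> hm"
  proof -
    have "E \<subseteq> {y. axis None 1 \<bullet> y \<le> hm}"
      using finE unfolding hm_def E_def[symmetric] by (auto simp: cart_eq_inner_axis[symmetric] inner_commute)
    then have "convex hull E \<subseteq> {y. axis None 1 \<bullet> y \<le> hm}"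
      by (intro hull_minimal) (auto simp: convex_halfspace_le)
    then show ?thesis using p KM[of h] unfolding E_def
      by (auto simp: cart_eq_inner_axis[symmetric] inner_commute)
  qed
  have hm: "hm = ho - h" using hm_le hm_ge by simp
  have hm0: "0 \<le> hm" using hm h_le by simp
  define c where "c = hm *\<^sub>R (axis None 1 :: real^'n option)"
  have c_Some: "c $ Some j = 0" for j by (simp add: c_def axis_def)
  have c_None: "c $ None = hm" by (simp add: c_def axis_def)
  have vc: "vhat v ho + c = vhat v h"
  proof (rule vec_eq_iff[THEN iffD2], intro allI)
    fix i show "(vhat v ho + c) $ i = vhat v h $ i"
      by (cases i) (simp_all add: vhat_Some vhat_None c_Some c_None hm)
  qed
  have shift: "c + w \<in> Pc G f v h" if win: "w \<in> Pc G f v ho" for w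
  proof -
    obtain z where z: "w = vhat v ho + A *v z" "\<forall>i. 0 \<le> w $ i" using win memPc by blast
    have "c + w = vhat v h + A *v z" using z(1) vc[symmetric] by (simp add: algebra_simps)
    moreover have "0 \<le> (c + w) $ i" for i
      using z(2) hm0 by (cases i) (auto simp: c_Some c_None)
    ultimately show ?thesis using memPc by blast
  qed
  have part1: "\<forall>gc. gc extreme_point_of Pc G f v h \<and> gc $ None = hm \<longrightarrow>
            (let yo = gc - hm *\<^sub>R axis None 1 in
               yo extreme_point_of Pc G f v ho
             \<and> (\<exists>x. Ghat G f *v x = vhat v ho - yo)
             \<and> (\<forall>x. Ghat G f *v x = vhat v ho - yo \<longrightarrow> lp_feasible G v x \<and> f \<bullet> x = ho))"
  proof (intro allI impI)
    fix gc assume gc: "gc extreme_point_of Pc G f v h \<and> gc $ None = hm"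
    define yo where "yo = gc - c"
    have gcP: "gc \<in> Pc G f v h" using gc by (simp add: extreme_point_of_def)
    obtain z where z: "gc = vhat v h + A *v z" "\<forall>i. 0 \<le> gc $ i" using gcP memPc by blast
    have yo_eq: "yo = vhat v ho + A *v z" unfolding yo_def using z(1) vc[symmetric]
      by (simp add: algebra_simps)
    have yoP: "\<forall>i. 0 \<le> yo $ i"
    proof
      fix i show "0 \<le> yo $ i" using z(2) gc by (cases i) (auto simp: yo_def c_Some c_None)
    qed
    have yoN: "yo $ None = 0" using gc by (simp add: yo_def c_None)
    have yo_in: "yo \<in> Pc G f v ho" using yo_eq yoP memPc by blast
    have ext: "yo extreme_point_of Pc G f v ho"
      unfolding extreme_point_of_def
    proof (intro conjI ballI yo_in)
      fix a b assume a: "a \<in> Pc G f v ho" and b: "b \<in> Pc G f v ho"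
      show "yo \<notin> open_segment a b"
      proof
        assume "yo \<in> open_segment a b"
        then have "c + yo \<in> open_segment (c + a) (c + b)" by simp
        moreover have "c + yo = gc" by (simp add: yo_def)
        ultimately show False using gc shift[OF a] shift[OF b]
          by (auto simp: extreme_point_of_def)
      qed
    qed
    have ex: "\<exists>x. Ghat G f *v x = vhat v ho - yo"
      by (rule exI[of _ "- z"]) (simp add: Ghat_neg yo_eq A_def)
    have all: "lp_feasible G v x \<and> f \<bullet> x = ho" if "Ghat G f *v x = vhat v ho - yo" for x
      using L[of x ho yo] that yoP yoN by (simp add: A_def)
    show "let yo = gc - hm *\<^sub>R axis None 1 in
               yo extreme_point_of Pc G f v ho
             \<and> (\<exists>x. Ghat G f *v x = vhat v ho - yo)
             \<and> (\<forall>x. Ghat G f *v x = vhat v ho - yo \<longrightarrow> lp_feasible G v x \<and> f \<bullet> x = ho)"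
      unfolding Let_def using ext ex all by (simp add: yo_def c_def)
  qed
  have hullE: "convex hull {g. g extreme_point_of Pc G f v ho} = Pc G f v ho"
    using KM[of ho] by simp
  have part2: "{x. lp_feasible G v x \<and> f \<bullet> x = ho}
           = {x. \<exists>y \<in> Pc G f v ho. Ghat G f *v x = vhat v ho - y}"
  proof (intro equalityI subsetI)
    fix x assume "x \<in> {x. lp_feasible G v x \<and> f \<bullet> x = ho}"
    then have x: "lp_feasible G v x" "f \<bullet> x = ho" by auto
    have "vhat v ho - A *v x \<in> Pc G f v ho" using opt_in[OF x] by simp
    then show "x \<in> {x. \<exists>y \<in> Pc G f v ho. Ghat G f *v x = vhat v ho - y}"
      by (auto simp: A_def intro!: bexI[of _ "vhat v ho - A *v x"])
  next
    fix x assume "x \<in> {x. \<exists>y \<in> Pc G f v ho. Ghat G f *v x = vhat v ho - y}"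
    then obtain y where y: "y \<in> Pc G f v ho" "A *v x = vhat v ho - y" by (auto simp: A_def)
    have yP: "\<forall>i. 0 \<le> y $ i" using y(1) memPc by blast
    from L[OF y(2) yP] have "lp_feasible G v x" "f \<bullet> x = ho + y $ None" by auto
    moreover have "f \<bullet> x \<le> ho" using maximal calculation(1) by blast
    ultimately show "x \<in> {x. lp_feasible G v x \<and> f \<bullet> x = ho}" using yP[rule_format, of None] by auto
  qed
  show ?thesis using part1 part2 hullE by simp
qed

end
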